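(* Let $\sigma\in[0,c]$ and let $\omega_k=(Z_k,E_k,-\lambda_k)$ be given. If for every choice of parameters $(W_k,\theta_k,\beta_k)\in\mathcal{S}(\sigma,A)$ the iteration below produces $\omega_{k+1}=\omega_k$, then $\omega_k=\omega_{k+1}\in\Omega^*$.
   Context: Let $A\in\mathbb{R}^{m\times d}$, $X\in\mathbb{R}^{m\times n}$, and let $f:\mathbb{R}^{d\times n}\to\mathbb{R}$, $g:\mathbb{R}^{m\times n}\to\mathbb{R}$ be convex. Consider the problem $\min_{Z,E} f(Z)+g(E)$ subject to $X=AZ+E$. Triples are written $\omega=(Z,E,-\lambda)$ with $\lambda\in\mathbb{R}^{m\times n}$ a Lagrange multiplier. $\Omega^*$ is the solution set: the set of $\omega^*=(Z^*,E^*,-\lambda^* )$ with $0\in\partial f(Z^* )+A^\top\lambda^*$, $0\in\partial g(E^* )+\lambda^*$, $AZ^*+E^*=X$. $\circ$ is the Hadamard product; $\beta^{-1}$ is the entrywise reciprocal; $\tfrac{\theta}{2}\circ\|M\|_F^2:=\tfrac12\sum_{ij}\theta_{ij}M_{ij}^2$. Iteration (D-LADMM), with parameters $W_k\in\mathbb{R}^{m\times d}$, $\theta_k\in\mathbb{R}^{d\times n}$, $\beta_k\in\mathbb{R}^{m\times n}$: $Z_{k+1}=\arg\min_Z\{ f(Z)+\tfrac{\theta_k}{2}\circ\|Z-Z_k+\theta_k^{-1}\circ W_k^\top(\lambda_k+\beta_k\circ(AZ_k+E_k-X))\|_F^2\}$, $E_{k+1}=\arg\min_E\{g(E)+\tfrac{\beta_k}{2}\circ\|E-X+AZ_{k+1}+\beta_k^{-1}\circ\lambda_k\|_F^2\}$,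 $\lambda_{k+1}=\lambda_k+\beta_k\circ(AZ_{k+1}+E_{k+1}-X)$. $\mathcal{S}(\sigma,A)$ is the set of $(W,\theta,\beta)$ with $\|W-A\|\le\sigma$ (spectral norm), $\theta,\beta$ entrywise positive, and $Z\mapsto\theta\circ Z-W^\top(\beta\circ(AZ))$ positive definite ($\langle\cdot(Z),Z\rangle>0$ for $Z\neq0$). Standing assumption: there is a constant $c$ such that $\mathcal{S}(\sigma,A)\ne\emptyset$ for all $0\le\sigma\le c$. *)

theory Defs
  imports "HOL-Analysis.Analysis"
begin

text \<open>Matrices are elements of real^'c^'r (rows indexed by 'r, columns by 'c).
  The library inner product / norm on this type is the Frobenius one.\<close>

definition had :: "real^'c^'r \<Rightarrow> real^'c^'r \<Rightarrow> real^'c^'r" where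
  "had P Q = (\<chi> i j. P$i$j * Q$i$j)"

definition entrywise_inv :: "real^'c^'r \<Rightarrow> real^'c^'r" where
  "entrywise_inv P = (\<chi> i j. inverse (P$i$j))"

definition wsqnorm :: "real^'c^'r \<Rightarrow> real^'c^'r \<Rightarrow> real" where
  "wsqnorm \<theta> M = (1/2) * (\<Sum>i\<in>UNIV. \<Sum>j\<in>UNIV. \<theta>$i$j * (M$i$j)^2)"

definition entrywise_pos :: "real^'c^'r \<Rightarrow> bool" where
  "entrywise_pos P \<longleftrightarrow> (\<forall>i j. P$i$j > 0)"

definition spec_norm :: "real^'c^'r \<Rightarrow> real" where
  "spec_norm M = onorm (\<lambda>x. M *v x)"

definition param_set ::
  "real \<Rightarrow> real^'d^'m \<Rightarrow> ((real^'d^'m) \<times> (real^'n^'d) \<times> (real^'n^'m)) set" where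
  "param_set \<sigma> A = {(W, \<theta>, \<beta>). spec_norm (W - A) \<le> \<sigma> \<and> entrywise_pos \<theta> \<and> entrywise_pos \<beta> \<and>
      (\<forall>Z::real^'n^'d. Z \<noteq> 0 \<longrightarrow> inner (had \<theta> Z - transpose W ** had \<beta> (A ** Z)) Z > 0)}"

definition subdiff :: "('a::real_inner \<Rightarrow> real) \<Rightarrow> 'a \<Rightarrow> 'a set" where
  "subdiff f x = {G. \<forall>y. f y \<ge> f x + inner G (y - x)}"

definition sol_set ::
  "(real^'n^'d \<Rightarrow> real) \<Rightarrow> (real^'n^'m \<Rightarrow> real) \<Rightarrow> real^'d^'m \<Rightarrow> real^'n^'m
    \<Rightarrow> ((real^'n^'d) \<times> (real^'n^'m) \<times> (real^'n^'m)) set" where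
  "sol_set f g A X = {(Z, E, mlam). let lam = - mlam in
      0 \<in> (\<lambda>G. G + transpose A ** lam) ` subdiff f Z \<and>
      0 \<in> (\<lambda>G. G + lam) ` subdiff g E \<and> A ** Z + E = X}"

definition Zobj ::
  "(real^'n^'d \<Rightarrow> real) \<Rightarrow> real^'d^'m \<Rightarrow> real^'n^'m \<Rightarrow> real^'d^'m \<Rightarrow> real^'n^'d \<Rightarrow> real^'n^'m
    \<Rightarrow> real^'n^'d \<Rightarrow> real^'n^'m \<Rightarrow> real^'n^'m \<Rightarrow> real^'n^'d \<Rightarrow> real" where
  "Zobj f A X W \<theta> \<beta> Zk Ek lamk Z = f Z + wsqnorm \<theta>
      (Z - Zk + had (entrywise_inv \<theta>) (transpose W ** (lamk + had \<beta> (A ** Zk + Ek - X))))"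

definition Eobj ::
  "(real^'n^'m \<Rightarrow> real) \<Rightarrow> real^'d^'m \<Rightarrow> real^'n^'m \<Rightarrow> real^'n^'m
    \<Rightarrow> real^'n^'d \<Rightarrow> real^'n^'m \<Rightarrow> real^'n^'m \<Rightarrow> real" where
  "Eobj g A X \<beta> Znew lamk E = g E + wsqnorm \<beta> (E - X + A ** Znew + had (entrywise_inv \<beta>) lamk)"

text \<open>One D-LADMM step maps (Zk,Ek,lk) to (Z1,E1,l1) (Z1, E1 are minimizers of the
  subproblems, which are unique since the objectives are strongly convex).\<close>
definition dladmm_step ::
  "(real^'n^'d \<Rightarrow> real) \<Rightarrow> (real^'n^'m \<Rightarrow> real) \<Rightarrow> real^'d^'m \<Rightarrow> real^'n^'m
   \<Rightarrow> real^'d^'m \<Rightarrow> real^'n^'d \<Rightarrow> real^'n^'m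
   \<Rightarrow> real^'n^'d \<Rightarrow> real^'n^'m \<Rightarrow> real^'n^'m
   \<Rightarrow> real^'n^'d \<Rightarrow> real^'n^'m \<Rightarrow> real^'n^'m \<Rightarrow> bool" where
  "dladmm_step f g A X W \<theta> \<beta> Zk Ek lamk Z1 E1 lam1 \<longleftrightarrow>
     (\<forall>Z. Zobj f A X W \<theta> \<beta> Zk Ek lamk Z1 \<le> Zobj f A X W \<theta> \<beta> Zk Ek lamk Z) \<and>
     (\<forall>E. Eobj g A X \<beta> Z1 lamk E1 \<le> Eobj g A X \<beta> Z1 lamk E) \<and>
     lam1 = lamk + had \<beta> (A ** Z1 + E1 - X)"

end

theory Submission
  imports Defs
begin

lemma spec_zero:
  fixes M :: "real^'c^'r"
  assumes "spec_norm M \<le> 0" shows "M = 0"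
proof -
  have bl: "bounded_linear (\<lambda>x. M *v x)"
    by (simp add: matrix_vector_mul_bounded_linear)
  have "onorm (\<lambda>x. M *v x) = 0" using assms onorm_pos_le[OF bl] unfolding spec_norm_def by linarith
  then have "\<forall>x. M *v x = 0" using onorm_eq_0[OF bl] by blast
  then show ?thesis by (metis matrix_eq matrix_vector_mult_0)
qed

lemma wsq_expand:
  fixes \<theta> D v :: "real^'c^'r" and t :: real
  assumes pos: "entrywise_pos \<theta>"
  shows "wsqnorm \<theta> (t *\<^sub>R D + had (entrywise_inv \<theta>) v)
     = wsqnorm \<theta> (had (entrywise_inv \<theta>) v) + t * inner D v + t^2 * wsqnorm \<theta> D"
proof -
  have e: "\<theta>$i$j * (t * D$i$j + inverse (\<theta>$i$j) * v$i$j)^2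
     = \<theta>$i$j * (inverse (\<theta>$i$j) * v$i$j)^2 + 2 * t * (D$i$j * v$i$j) + t^2 * (\<theta>$i$j * (D$i$j)^2)" for i j
  proof -
    have "\<theta>$i$j > 0" using pos unfolding entrywise_pos_def by blast
    then show ?thesis by (simp add: field_simps power2_eq_square)
  qed
  have "wsqnorm \<theta> (t *\<^sub>R D + had (entrywise_inv \<theta>) v) = (1/2) * (\<Sum>i\<in>UNIV. \<Sum>j\<in>UNIV.
     \<theta>$i$j * (inverse (\<theta>$i$j) * v$i$j)^2 + 2 * t * (D$i$j * v$i$j) + t^2 * (\<theta>$i$j * (D$i$j)^2))"
    unfolding wsqnorm_def had_def entrywise_inv_def
    by (simp only: vec_lambda_beta vector_add_component vector_scaleR_component real_scaleR_def e)
  also have "\<dots> = wsqnorm \<theta> (had (entrywise_inv \<theta>) v) + t * inner D v + t^2 * wsqnorm \<theta> D"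
    unfolding wsqnorm_def had_def entrywise_inv_def inner_vec_def
    by (simp add: sum.distrib sum_distrib_left algebra_simps)
  finally show ?thesis .
qed

lemma min_subdiff:
  fixes h :: "real^'c^'r \<Rightarrow> real" and \<theta> v x0 :: "real^'c^'r"
  assumes cvx: "convex_on UNIV h" and pos: "entrywise_pos \<theta>"
    and mn: "\<forall>Z. h x0 + wsqnorm \<theta> (x0 - x0 + had (entrywise_inv \<theta>) v)
              \<le> h Z + wsqnorm \<theta> (Z - x0 + had (entrywise_inv \<theta>) v)"
  shows "- v \<in> subdiff h x0"
  unfolding subdiff_def
proof (intro CollectI allI)
  fix Y
  define D where "D = Y - x0"
  define C where "C = wsqnorm \<theta> D"
  define W0 where "W0 = wsqnorm \<theta> (had (entrywise_inv \<theta>) v)"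
  have key: "h x0 \<le> h Y + inner D v + t * C" if t: "0 < t" "t \<le> 1" for t
  proof -
    have "h x0 + W0 \<le> h (x0 + t *\<^sub>R D) + wsqnorm \<theta> (t *\<^sub>R D + had (entrywise_inv \<theta>) v)"
      using mn[rule_format, of "x0 + t *\<^sub>R D"] unfolding W0_def by simp
    also have "\<dots> = h (x0 + t *\<^sub>R D) + W0 + t * inner D v + t^2 * C"
      using wsq_expand[OF pos] unfolding W0_def C_def by simp
    finally have 1: "h x0 \<le> h (x0 + t *\<^sub>R D) + t * inner D v + t^2 * C" by simp
    have "x0 + t *\<^sub>R D = (1 - t) *\<^sub>R x0 + t *\<^sub>R Y"
      unfolding D_def by (simp add: algebra_simps)
    then have 2: "h (x0 + t *\<^sub>R D) \<le> (1 - t) * h x0 + t * h Y"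
      using convex_onD[OF cvx, of t x0 Y] t by simp
    from 1 2 have "t * h x0 \<le> t * (h Y + inner D v + t * C)"
      by (simp add: algebra_simps power2_eq_square)
    then show ?thesis using t by simp
  qed
  have "h x0 \<le> h Y + inner D v"
  proof (rule ccontr)
    assume "\<not> ?thesis"
    then have gt: "h x0 - (h Y + inner D v) > 0" by simp
    define t where "t = min 1 ((h x0 - (h Y + inner D v)) / (\<bar>C\<bar> + 1))"
    have t0: "0 < t" "t \<le> 1" using gt unfolding t_def by auto
    have "t * (\<bar>C\<bar> + 1) \<le> h x0 - (h Y + inner D v)"
      unfolding t_def
      by (smt (verit) gt divide_pos_pos min.cobounded2 mult_right_mono nonzero_eq_divide_eq abs_ge_zero)
    moreover have "t * C \<le> t * \<bar>C\<bar>" using t0 by (simp add: mult_left_mono)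
    moreover have "t * (\<bar>C\<bar> + 1) = t * \<bar>C\<bar> + t" by (simp add: algebra_simps)
    ultimately have "t * C < h x0 - (h Y + inner D v)" using t0 by linarith
    with key[OF t0] show False by simp
  qed
  then show "h x0 + inner (- v) (Y - x0) \<le> h Y"
    unfolding D_def by (simp add: inner_commute)
qed

lemma had_zero: "had \<beta> 0 = 0"
  unfolding had_def by (simp add: vec_eq_iff)

lemma had_eq_zero: "entrywise_pos \<beta> \<Longrightarrow> had \<beta> R = 0 \<Longrightarrow> R = 0"
  unfolding had_def entrywise_pos_def
  by (simp add: vec_eq_iff) (metis less_irrefl)

lemma inner_transpose_mult:
  fixes A :: "real^'d^'m" and Y :: "real^'n^'m" and Z :: "real^'n^'d"
  shows "inner (transpose A ** Y) Z = inner Y (A ** Z)"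
proof -
  have "inner (transpose A ** Y) Z = (\<Sum>i\<in>UNIV. \<Sum>j\<in>UNIV. \<Sum>k\<in>UNIV. A$k$i * Y$k$j * Z$i$j)"
    unfolding inner_vec_def matrix_matrix_mult_def transpose_def
    by (simp add: sum_distrib_right)
  also have "\<dots> = (\<Sum>j\<in>UNIV. \<Sum>i\<in>UNIV. \<Sum>k\<in>UNIV. A$k$i * Y$k$j * Z$i$j)"
    by (rule sum.swap)
  also have "\<dots> = (\<Sum>j\<in>UNIV. \<Sum>k\<in>UNIV. \<Sum>i\<in>UNIV. A$k$i * Y$k$j * Z$i$j)"
    by (rule sum.cong[OF refl], rule sum.swap)
  also have "\<dots> = (\<Sum>k\<in>UNIV. \<Sum>j\<in>UNIV. \<Sum>i\<in>UNIV. A$k$i * Y$k$j * Z$i$j)"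
    by (rule sum.swap)
  also have "\<dots> = inner Y (A ** Z)"
    unfolding inner_vec_def matrix_matrix_mult_def
    by (simp add: sum_distrib_left mult.assoc mult.left_commute)
  finally show ?thesis .
qed

lemma param_nonempty:
  fixes A :: "real^'d^'m" and \<sigma> :: real
  assumes "0 \<le> \<sigma>"
  shows "\<exists>\<theta> \<beta>. (A, \<theta>, \<beta>) \<in> (param_set \<sigma> A :: ((real^'d^'m) \<times> (real^'n^'d) \<times> (real^'n^'m)) set)"
proof -
  have "linear (\<lambda>Z::real^'n^'d. A ** Z)"
    by (rule linearI) (simp_all add: matrix_matrix_mult_def vec_eq_iff sum_distrib_left mult.left_commute distrib_left sum.distrib)
  then have "bounded_linear (\<lambda>Z::real^'n^'d. A ** Z)"
    using linear_conv_bounded_linear by blast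
  then obtain K where K: "K > 0" "\<And>Z::real^'n^'d. norm (A ** Z) \<le> norm Z * K"
    using bounded_linear.pos_bounded by blast
  define \<theta> :: "real^'n^'d" where "\<theta> = (\<chi> i j. K^2 + 1)"
  define \<beta> :: "real^'n^'m" where "\<beta> = (\<chi> i j. 1)"
  have hb: "had \<beta> Y = Y" for Y unfolding had_def \<beta>_def by (simp add: vec_eq_iff)
  have ht: "had \<theta> Z = (K^2 + 1) *\<^sub>R Z" for Z unfolding had_def \<theta>_def by (simp add: vec_eq_iff)
  have spec0: "spec_norm (A - A) = 0"
    proof -
    have e: "(\<lambda>x::real^'d. (A - A) *v x) = (\<lambda>x. 0)" by (simp add: fun_eq_iff)
    show ?thesis unfolding spec_norm_def e by (rule onorm_zero)
  qed
  have pd: "inner (had \<theta> Z - transpose A ** had \<beta> (A ** Z)) Z > 0" if "Z \<noteq> 0" for Z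
  proof -
    have "inner (had \<theta> Z - transpose A ** had \<beta> (A ** Z)) Z = (K^2+1) * (norm Z)^2 - (norm (A ** Z))^2"
      unfolding ht hb inner_diff_left inner_transpose_mult
      by (simp add: power2_norm_eq_inner)
    moreover have "(norm (A ** Z))^2 \<le> (norm Z * K)^2"
      using K(2)[of Z] by (simp add: power_mono)
    moreover have "(norm Z)^2 > 0" using that by simp
    ultimately show ?thesis
      by (smt (verit) mult_pos_pos power_mult_distrib zero_less_power2 mult.commute distrib_right)
  qed
  have "(A, \<theta>, \<beta>) \<in> (param_set \<sigma> A :: ((real^'d^'m) \<times> (real^'n^'d) \<times> (real^'n^'m)) set)"
    unfolding param_set_def using spec0 assms pd
    by (auto simp: entrywise_pos_def \<theta>_def \<beta>_def add_pos_nonneg[OF _ zero_le_power2] add_nonneg_pos[OF zero_le_power2])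
  then show ?thesis by blast
qed
theorem lemma3:
  fixes A :: "real^'d^'m" and X :: "real^'n^'m"
    and f :: "real^'n^'d \<Rightarrow> real" and g :: "real^'n^'m \<Rightarrow> real"
    and c \<sigma> :: real
    and Zk Z1 :: "real^'n^'d" and Ek E1 lamk lam1 :: "real^'n^'m"
  assumes "convex_on UNIV f" and "convex_on UNIV g"
    and standing: "\<forall>s. 0 \<le> s \<and> s \<le> c \<longrightarrow> param_set s A \<noteq> {}"
    and "0 \<le> \<sigma>" and "\<sigma> \<le> c"
    and fixed: "\<forall>(W, \<theta>, \<beta>) \<in> param_set \<sigma> A.
        dladmm_step f g A X W \<theta> \<beta> Zk Ek lamk Z1 E1 lam1 \<and> (Z1, E1, - lam1) = (Zk, Ek, - lamk)"
  shows "(Zk, Ek, - lamk) = (Z1, E1, - lam1) \<and> (Zk, Ek, - lamk) \<in> sol_set f g A X"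
proof -
  obtain \<theta> \<beta> where P: "(A, \<theta>, \<beta>) \<in> (param_set \<sigma> A :: ((real^'d^'m) \<times> (real^'n^'d) \<times> (real^'n^'m)) set)"
    using param_nonempty[OF \<open>0 \<le> \<sigma>\<close>] by blast
  have tp: "entrywise_pos \<theta>" "entrywise_pos \<beta>" using P unfolding param_set_def by auto
  from fixed P have st: "dladmm_step f g A X A \<theta> \<beta> Zk Ek lamk Z1 E1 lam1"
    and eq: "Z1 = Zk" "E1 = Ek" "lam1 = lamk" by auto
  from st eq have "had \<beta> (A ** Zk + Ek - X) = 0" unfolding dladmm_step_def by simp
  then have R: "A ** Zk + Ek - X = 0" using had_eq_zero tp(2) by blast
  then have R2: "A ** Zk + Ek = X" by simp
  from st eq have mz: "\<forall>Z. f Zk + wsqnorm \<theta> (Zk - Zk + had (entrywise_inv \<theta>) (transpose A ** lamk))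
      \<le> f Z + wsqnorm \<theta> (Z - Zk + had (entrywise_inv \<theta>) (transpose A ** lamk))"
    unfolding dladmm_step_def Zobj_def R had_zero by simp
  have sf: "- (transpose A ** lamk) \<in> subdiff f Zk"
    by (rule min_subdiff[OF assms(1) tp(1) mz])
  have e1: "E - X + A ** Zk = E - Ek" for E using R2 by (auto simp: algebra_simps)
  from st eq have me0: "\<forall>E. Eobj g A X \<beta> Zk lamk Ek \<le> Eobj g A X \<beta> Zk lamk E"
    unfolding dladmm_step_def by simp
  have me: "\<forall>E. g Ek + wsqnorm \<beta> (Ek - Ek + had (entrywise_inv \<beta>) lamk)
      \<le> g E + wsqnorm \<beta> (E - Ek + had (entrywise_inv \<beta>) lamk)"
    using me0 unfolding Eobj_def e1 by simp
  have sg: "- lamk \<in> subdiff g Ek"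
    by (rule min_subdiff[OF assms(2) tp(2) me])
  have "0 \<in> (\<lambda>G. G + transpose A ** lamk) ` subdiff f Zk"
    by (rule rev_image_eqI[OF sf]) simp
  moreover have "0 \<in> (\<lambda>G. G + lamk) ` subdiff g Ek"
    by (rule rev_image_eqI[OF sg]) simp
  ultimately have "(Zk, Ek, - lamk) \<in> sol_set f g A X"
    unfolding sol_set_def using R2 by simp
  then show ?thesis using eq by simp
qed

end
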